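(* Let $\mathcal S$ be a critical poset, with $a$, $\mathcal S_a$, $\mathcal V_\lambda(\mathcal S)=(V^{\mathcal S};V^{\mathcal S}_i)_{i\in\mathcal S}$ and $\mathcal V(\mathcal S_a)=(V^{\mathcal S};V^{\mathcal S}_i)_{i\in\mathcal S_a}$ as in the context, and write $V^{\mathcal S}_\lambda$ for the subspace at $a$. Let $\chi^a=(\chi^a_i)_{i\in\mathcal S_a}\in\mathbb R_+^{|\mathcal S_a|}$ be a weight such that $\mathcal V(\mathcal S_a)$ is $\chi^a$-stable, let $R=\min\{\dim M-\sum_{i\in\mathcal S_a}\chi^a_i\dim(V^{\mathcal S}_i\cap M): M \text{ a proper subspace of } V^{\mathcal S}\}$, let $0<\varepsilon<R$, $T=1+(R-\varepsilon)\dim V^{\mathcal S}_\lambda/\dim V^{\mathcal S}$, and define $\chi^{\mathcal S}_i=\chi^a_iT^{-1}$ for $i\in\mathcal S_a$ and $\chi^{\mathcal S}_a=(R-\varepsilon)T^{-1}$. Then $\mathcal V_\lambda(\mathcal S)$ is $\chi^{\mathcal S}$-stable for every $\lambda\in\mathbb C$.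
   Context: The critical posets are $(1,1,1,1),(2,2,2),(1,3,3),(1,2,5),(N,4)$, where $(t_1,\dots,t_s)$ is the disjoint union of incomparable chains of sizes $t_i$, $N$ has elements $a_1,a_2,b_1,b_2$ with exactly $a_1\prec b_1,a_2\prec b_1,a_2\prec b_2$, and $(N,4)$ is the disjoint union of $N$ and a 4-chain. A subspace representation $(V;V_i)_{i\in\mathcal P}$ of a poset $\mathcal P$ consists of a finite-dimensional complex space $V$ and subspaces with $V_i\subseteq V_j$ when $i\prec j$. For $\chi\in\mathbb R_+^{|\mathcal P|}$ it is $\chi$-stable if $\sum_i\chi_i\dim V_i=\dim V$ and $\sum_i\chi_i\dim(V_i\cap M)<\dim M$ for every subspace $0\neq M\subsetneq V$. With $e_i$ standard basis vectors, $e_{i_1\dots i_k}=e_{i_1}+\dots+e_{i_k}$, $\langle\cdots\rangle$ span, define $\mathcal V_\lambda(\mathcal S)$, $\lambda\in\mathbb C$ (chains bottom to top): $(1,1,1,1)$: $\mathbb C^2$; $\langle e_1\rangle,\langle e_2\rangle,\langle e_1+e_2\rangle,\langle e_1+\lambda e_2\rangle$. $(2,2,2)$: $\mathbb C^3$; $\langle e_{123}\rangle\subset\langle e_{123},e_1+\lambda e_3\rangle$; $\langle e_1\rangle\subset\langle e_1,e_2\rangle$; $\langle e_3\rangle\subset\langle e_2,e_3\rangle$. $(1,3,3)$: $\mathbb C^4$; $\langle e_{123},e_{24}\rangle$; $\langle e_4\rangle\subset\langle e_1,e_4\rangle\subset\langle e_1,e_4,e_2+\lambda e_3\rangle$; $\langle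 e_3\rangle\subset\langle e_2,e_3\rangle\subset\langle e_1,e_2,e_3\rangle$. $(1,2,5)$: $\mathbb C^6$; $\langle e_{123},e_{245},e_{16}\rangle$; $\langle e_5,e_6\rangle\subset\langle e_1,e_2,e_5,e_6\rangle$; $\langle e_4\rangle\subset\langle e_3,e_4\rangle\subset\langle e_2,e_3,e_4\rangle\subset\langle e_1,e_2,e_3,e_4\rangle\subset\langle e_1,e_2,e_3,e_4,e_5+\lambda e_6\rangle$. $(N,4)$: $\mathbb C^5$; 4-chain $\langle e_4\rangle\subset\langle e_3,e_4\rangle\subset\langle e_2,e_3,e_4\rangle\subset\langle e_1,e_2,e_3,e_4\rangle$; $a_1\mapsto\langle e_{235},e_{134}\rangle$, $a_2\mapsto\langle e_5\rangle$, $b_1\mapsto\langle e_{235},e_{134},e_5,e_3+\lambda e_4\rangle$, $b_2\mapsto\langle e_1,e_2,e_5\rangle$. $a\in\mathcal S$ is the unique element whose subspace depends on $\lambda$; $\mathcal S_a=\mathcal S\setminus\{a\}$; $\mathcal V(\mathcal S_a)$ is $\mathcal V_\lambda(\mathcal S)$ with the subspace at $a$ deleted. *)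

theory Defs
  imports Complex_Main "HOL-Library.Function_Algebras"
begin

text \<open>Vectors are functions nat => complex; the space C^n is the span of
  the standard basis vectors e_1, ..., e_n (coordinates 1..n).\<close>

definition cscale :: "complex \<Rightarrow> (nat \<Rightarrow> complex) \<Rightarrow> (nat \<Rightarrow> complex)" where
  "cscale c v = (\<lambda>j. c * v j)"

abbreviation cspan :: "(nat \<Rightarrow> complex) set \<Rightarrow> (nat \<Rightarrow> complex) set" where
  "cspan \<equiv> module.span cscale"

abbreviation csubspace :: "(nat \<Rightarrow> complex) set \<Rightarrow> bool" where
  "csubspace \<equiv> module.subspace cscale"

abbreviation cdim :: "(nat \<Rightarrow> complex) set \<Rightarrow> nat" where
  "cdim \<equiv> vector_space.dim cscale"

definition cv :: "complex list \<Rightarrow> nat \<Rightarrow> complex" where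
  "cv cs = (\<lambda>j. if 1 \<le> j \<and> j \<le> length cs then cs ! (j - 1) else 0)"

definition ev :: "nat \<Rightarrow> nat \<Rightarrow> complex" where
  "ev i = (\<lambda>j. if j = i then 1 else 0)"

definition Cn :: "nat \<Rightarrow> (nat \<Rightarrow> complex) set" where
  "Cn n = cspan {ev j | j. 1 \<le> j \<and> j \<le> n}"

definition chi_stable ::
  "(nat \<Rightarrow> complex) set \<Rightarrow> nat set \<Rightarrow> (nat \<Rightarrow> (nat \<Rightarrow> complex) set) \<Rightarrow> (nat \<Rightarrow> real) \<Rightarrow> bool" where
  "chi_stable V I W \<chi> \<longleftrightarrow>
     (\<Sum>i\<in>I. \<chi> i * real (cdim (W i))) = real (cdim V) \<and>
     (\<forall>M. csubspace M \<and> M \<subseteq> V \<and> M \<noteq> {0} \<and> M \<noteq> V \<longrightarrow>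
        (\<Sum>i\<in>I. \<chi> i * real (cdim (W i \<inter> M))) < real (cdim M))"

text \<open>Elements of each poset are numbered 0..card-1
  (order listed below); the element a is the one carrying the lambda-subspace.
  (1,1,1,1): 0,1,2,3 the four one-element chains; a = 3.
  (2,2,2):   chain 0<1, chain 2<3, chain 4<5; a = 1.
  (1,3,3):   chain 0; chain 1<2<3; chain 4<5<6; a = 3.
  (1,2,5):   chain 0; chain 1<2; chain 3<4<5<6<7; a = 7.
  (N,4):     chain 0<1<2<3; N: 4 = a1, 5 = a2, 6 = b1, 7 = b2
             with 4<6, 5<6, 5<7; a = 6.\<close>
datatype crit = P1111 | P222 | P133 | P125 | PN4

fun crit_le :: "crit \<Rightarrow> nat \<Rightarrow> nat \<Rightarrow> bool" where
  "crit_le P1111 i j = (i = j)"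
| "crit_le P222 i j = (i = j \<or> (i,j) \<in> {(0,1),(2,3),(4,5)})"
| "crit_le P133 i j = (i = j \<or> (i,j) \<in> {(1,2),(2,3),(1,3),(4,5),(5,6),(4,6)})"
| "crit_le P125 i j = (i = j \<or> (i,j) \<in> {(1,2)} \<or> (3 \<le> i \<and> i < j \<and> j \<le> 7))"
| "crit_le PN4 i j = (i = j \<or> (i < j \<and> j \<le> 3) \<or> (i,j) \<in> {(4,6),(5,6),(5,7)})"

fun crit_card :: "crit \<Rightarrow> nat" where
  "crit_card P1111 = 4" | "crit_card P222 = 6" | "crit_card P133 = 7"
| "crit_card P125 = 8" | "crit_card PN4 = 8"

definition elems :: "crit \<Rightarrow> nat set" where
  "elems S = {..<crit_card S}"

fun elt_a :: "crit \<Rightarrow> nat" where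
  "elt_a P1111 = 3" | "elt_a P222 = 1" | "elt_a P133 = 3"
| "elt_a P125 = 7" | "elt_a PN4 = 6"

definition elems_a :: "crit \<Rightarrow> nat set" where
  "elems_a S = elems S - {elt_a S}"

fun ambdim :: "crit \<Rightarrow> nat" where
  "ambdim P1111 = 2" | "ambdim P222 = 3" | "ambdim P133 = 4"
| "ambdim P125 = 6" | "ambdim PN4 = 5"

definition Vamb :: "crit \<Rightarrow> (nat \<Rightarrow> complex) set" where
  "Vamb S = Cn (ambdim S)"

fun Vfix :: "crit \<Rightarrow> nat \<Rightarrow> (nat \<Rightarrow> complex) set" where
  "Vfix P1111 i =
     (if i = 0 then cspan {cv [1,0]}
      else if i = 1 then cspan {cv [0,1]}
      else if i = 2 then cspan {cv [1,1]}
      else {0})"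
| "Vfix P222 i =
     (if i = 0 then cspan {cv [1,1,1]}
      else if i = 2 then cspan {cv [1,0,0]}
      else if i = 3 then cspan {cv [1,0,0], cv [0,1,0]}
      else if i = 4 then cspan {cv [0,0,1]}
      else if i = 5 then cspan {cv [0,1,0], cv [0,0,1]}
      else {0})"
| "Vfix P133 i =
     (if i = 0 then cspan {cv [1,1,1,0], cv [0,1,0,1]}
      else if i = 1 then cspan {cv [0,0,0,1]}
      else if i = 2 then cspan {cv [1,0,0,0], cv [0,0,0,1]}
      else if i = 4 then cspan {cv [0,0,1,0]}
      else if i = 5 then cspan {cv [0,1,0,0], cv [0,0,1,0]}
      else if i = 6 then cspan {cv [1,0,0,0], cv [0,1,0,0], cv [0,0,1,0]}
      else {0})"
| "Vfix P125 i =
     (if i = 0 then cspan {cv [1,1,1,0,0,0], cv [0,1,0,1,1,0], cv [1,0,0,0,0,1]}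
      else if i = 1 then cspan {ev 5, ev 6}
      else if i = 2 then cspan {ev 1, ev 2, ev 5, ev 6}
      else if i = 3 then cspan {ev 4}
      else if i = 4 then cspan {ev 3, ev 4}
      else if i = 5 then cspan {ev 2, ev 3, ev 4}
      else if i = 6 then cspan {ev 1, ev 2, ev 3, ev 4}
      else {0})"
| "Vfix PN4 i =
     (if i = 0 then cspan {ev 4}
      else if i = 1 then cspan {ev 3, ev 4}
      else if i = 2 then cspan {ev 2, ev 3, ev 4}
      else if i = 3 then cspan {ev 1, ev 2, ev 3, ev 4}
      else if i = 4 then cspan {cv [0,1,1,0,1], cv [1,0,1,1,0]}
      else if i = 5 then cspan {ev 5}
      else if i = 7 then cspan {ev 1, ev 2, ev 5}
      else {0})"

fun Vlam :: "crit \<Rightarrow> complex \<Rightarrow> (nat \<Rightarrow> complex) set" where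
  "Vlam P1111 l = cspan {cv [1, l]}"
| "Vlam P222 l = cspan {cv [1,1,1], cv [1,0,l]}"
| "Vlam P133 l = cspan {cv [1,0,0,0], cv [0,0,0,1], cv [0,1,l,0]}"
| "Vlam P125 l = cspan {ev 1, ev 2, ev 3, ev 4, cv [0,0,0,0,1,l]}"
| "Vlam PN4 l = cspan {cv [0,1,1,0,1], cv [1,0,1,1,0], ev 5, cv [0,0,1,l,0]}"

definition Vrep :: "crit \<Rightarrow> complex \<Rightarrow> nat \<Rightarrow> (nat \<Rightarrow> complex) set" where
  "Vrep S l i = (if i = elt_a S then Vlam S l else Vfix S i)"

definition Rmin :: "crit \<Rightarrow> (nat \<Rightarrow> real) \<Rightarrow> real" where
  "Rmin S \<chi>a = Min {real (cdim M) - (\<Sum>i\<in>elems_a S. \<chi>a i * real (cdim (Vfix S i \<inter> M))) | M.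
      csubspace M \<and> M \<subseteq> Vamb S \<and> M \<noteq> {0} \<and> M \<noteq> Vamb S}"

end

theory Submission
  imports Defs "HOL-Library.FuncSet"
begin

interpretation cvs: vector_space cscale
  by unfold_locales (auto simp: cscale_def fun_eq_iff algebra_simps)

lemma sum_cscale_apply:
  "(\<Sum>x\<in>A. cscale (f x) x) k = (\<Sum>x\<in>A. f x * x k)"
  by (induction A rule: infinite_finite_induct) (auto simp: cscale_def)

lemma indep_le_dim:
  assumes "cvs.independent X" "X \<subseteq> B" "B \<subseteq> cspan W" "finite W"
  shows "card X \<le> cdim B"
proof -
  obtain BB where BB: "BB \<subseteq> B" "cvs.independent BB" "B \<subseteq> cspan BB" "card BB = cdim B"
    by (rule cvs.basis_exists)
  have "finite BB" using cvs.independent_span_bound[of W BB] BB assms by auto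
  then show ?thesis using cvs.independent_span_bound[of BB X] BB assms by auto
qed

lemma dim_mono_fin:
  assumes "A \<subseteq> B" "B \<subseteq> cspan W" "finite W"
  shows "cdim A \<le> cdim B"
proof -
  obtain BA where BA: "BA \<subseteq> A" "cvs.independent BA" "A \<subseteq> cspan BA" "card BA = cdim A"
    by (rule cvs.basis_exists)
  show ?thesis using indep_le_dim[of BA B W] BA assms by auto
qed

lemma dim_psub:
  assumes "csubspace M" "M \<subseteq> B" "M \<noteq> B" "B \<subseteq> cspan W" "finite W"
  shows "cdim M < cdim B"
proof -
  obtain BA where BA: "BA \<subseteq> M" "cvs.independent BA" "M \<subseteq> cspan BA" "card BA = cdim M"
    by (rule cvs.basis_exists)
  obtain v where v: "v \<in> B" "v \<notin> M" using assms by auto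
  have "cspan BA \<subseteq> M" using BA assms cvs.span_minimal by blast
  then have nv: "v \<notin> cspan BA" using v by auto
  have ind: "cvs.independent (insert v BA)" using cvs.independent_insertI[OF nv BA(2)] .
  have fin: "finite BA" using cvs.independent_span_bound[of W BA] BA assms by auto
  have "v \<notin> BA" using v BA by auto
  then have "card (insert v BA) = card BA + 1" using fin by simp
  moreover have "card (insert v BA) \<le> cdim B" using indep_le_dim[OF ind _ assms(4,5)] v BA assms by auto
  ultimately show ?thesis using BA by auto
qed

lemma dim_Cn: "cdim (Cn n) = n"
proof -
  have E: "{ev j | j. 1 \<le> j \<and> j \<le> n} = ev ` {1..n}" by auto
  have inj: "inj_on ev {1..n}" by (auto simp: inj_on_def ev_def fun_eq_iff split: if_splits)
  have "cvs.independent (ev ` {1..n})"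
  proof (rule cvs.independent_if_scalars_zero)
    fix f x assume s: "(\<Sum>x\<in>ev ` {1..n}. cscale (f x) x) = 0" and x: "x \<in> ev ` {1..n}"
    then obtain k where k: "x = ev k" "k \<in> {1..n}" by auto
    have "0 = (\<Sum>x\<in>ev ` {1..n}. cscale (f x) x) k" using s by simp
    also have "\<dots> = (\<Sum>y\<in>ev ` {1..n}. f y * y k)" by (rule sum_cscale_apply)
    also have "\<dots> = f (ev k) * ev k k + (\<Sum>y\<in>ev ` {1..n} - {ev k}. f y * y k)"
      using k by (subst sum.remove[of _ "ev k"]) auto
    also have "(\<Sum>y\<in>ev ` {1..n} - {ev k}. f y * y k) = 0"
      by (rule sum.neutral) (auto simp: ev_def split: if_splits)
    finally show "f x = 0" using k by (simp add: ev_def)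
  qed simp
  then show ?thesis unfolding Cn_def E using cvs.dim_span_eq_card_independent card_image[OF inj] by simp
qed

lemma indep_test:
  assumes "finite A" "\<And>f. (\<And>k. (\<Sum>x\<in>A. f x * x k) = 0) \<Longrightarrow> \<forall>x\<in>A. f x = 0"
  shows "cvs.independent A"
proof (rule cvs.independent_if_scalars_zero[OF assms(1)])
  fix f x assume "(\<Sum>x\<in>A. cscale (f x) x) = 0" "x \<in> A"
  then show "f x = 0" using assms(2)[of f] sum_cscale_apply[of f A] by (metis zero_fun_apply)
qed

lemma neq_at: "x k \<noteq> y k \<Longrightarrow> x \<noteq> y" by auto



lemma dimlam: "ambdim S - 1 \<le> cdim (Vlam S l)"
proof (cases S)
  case P1111
  have d: "cv [1,l] \<noteq> 0" apply (rule neq_at[of _ 1], simp add: cv_def ev_def)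
    done
  have "cvs.independent {cv [1,l]}" using d by simp
  then show ?thesis using P1111 cvs.dim_span_eq_card_independent by simp
next
  case P222
  let ?A = "{cv [1,1,1], cv [1,0,l]}"
  have d: "cv [1,1,1] \<noteq> cv [1,0,l]" apply (rule neq_at[of _ 2], simp add: cv_def ev_def)
    done
  have "cvs.independent ?A"
  proof (rule indep_test)
    fix f assume h: "\<And>k. (\<Sum>x\<in>?A. f x * x k) = 0"
    have "\<And>k. f (cv [1,1,1]) * cv [1,1,1] k + f (cv [1,0,l]) * cv [1,0,l] k = 0" using h[of] d by simp
    from this[of 1] this[of 2] show "\<forall>x\<in>?A. f x = 0" by (simp add: cv_def)
  qed simp
  then show ?thesis using P222 d cvs.dim_span_eq_card_independent by simp
next
  case P133
  let ?a = "cv [1,0,0,0]" and ?b = "cv [0,0,0,1]" and ?c = "cv [0,1,l,0]"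
  have d: "?a \<noteq> ?b" "?a \<noteq> ?c" "?b \<noteq> ?c" apply (rule neq_at[of _ 1], simp add: cv_def ev_def)
    apply (rule neq_at[of _ 1], simp add: cv_def ev_def)
    apply (rule neq_at[of _ 4], simp add: cv_def ev_def)
    done
  have "cvs.independent {?a,?b,?c}"
  proof (rule indep_test)
    fix f assume h: "\<And>k. (\<Sum>x\<in>{?a,?b,?c}. f x * x k) = 0"
    have "\<And>k. f ?a * ?a k + (f ?b * ?b k + f ?c * ?c k) = 0" using h[of] d by simp
    from this[of 1] this[of 2] this[of 4] show "\<forall>x\<in>{?a,?b,?c}. f x = 0" by (simp add: cv_def)
  qed simp
  then show ?thesis using P133 d cvs.dim_span_eq_card_independent by simp
next
  case P125
  let ?c = "cv [0,0,0,0,1,l]"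
  have d: "ev 1 \<noteq> ev 2" "ev 1 \<noteq> ev 3" "ev 1 \<noteq> ev 4" "ev 1 \<noteq> ?c"
     "ev 2 \<noteq> ev 3" "ev 2 \<noteq> ev 4" "ev 2 \<noteq> ?c" "ev 3 \<noteq> ev 4" "ev 3 \<noteq> ?c" "ev 4 \<noteq> ?c"
    apply (rule neq_at[of _ 1], simp add: cv_def ev_def)
    apply (rule neq_at[of _ 1], simp add: cv_def ev_def)
    apply (rule neq_at[of _ 1], simp add: cv_def ev_def)
    apply (rule neq_at[of _ 1], simp add: cv_def ev_def)
    apply (rule neq_at[of _ 2], simp add: cv_def ev_def)
    apply (rule neq_at[of _ 2], simp add: cv_def ev_def)
    apply (rule neq_at[of _ 2], simp add: cv_def ev_def)
    apply (rule neq_at[of _ 3], simp add: cv_def ev_def)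
    apply (rule neq_at[of _ 3], simp add: cv_def ev_def)
    apply (rule neq_at[of _ 4], simp add: cv_def ev_def)
    done
  have "cvs.independent {ev 1, ev 2, ev 3, ev 4, ?c}"
  proof (rule indep_test)
    fix f assume h: "\<And>k. (\<Sum>x\<in>{ev 1, ev 2, ev 3, ev 4, ?c}. f x * x k) = 0"
    have "\<And>k. f (ev 1) * ev 1 k + (f (ev 2) * ev 2 k + (f (ev 3) * ev 3 k + (f (ev 4) * ev 4 k + f ?c * ?c k))) = 0" using h[of] d by simp
    from this[of 1] this[of 2] this[of 3] this[of 4] this[of 5] show "\<forall>x\<in>{ev 1, ev 2, ev 3, ev 4, ?c}. f x = 0" by (simp add: cv_def ev_def)
  qed simp
  then show ?thesis using P125 d cvs.dim_span_eq_card_independent by simp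
next
  case PN4
  let ?a = "cv [0,1,1,0,1]" and ?b = "cv [1,0,1,1,0]" and ?c = "cv [0,0,1,l,0]"
  have d: "?a \<noteq> ?b" "?a \<noteq> ev 5" "?a \<noteq> ?c" "?b \<noteq> ev 5" "?b \<noteq> ?c" "ev 5 \<noteq> ?c"
    apply (rule neq_at[of _ 1], simp add: cv_def ev_def)
    apply (rule neq_at[of _ 2], simp add: cv_def ev_def)
    apply (rule neq_at[of _ 2], simp add: cv_def ev_def)
    apply (rule neq_at[of _ 1], simp add: cv_def ev_def)
    apply (rule neq_at[of _ 1], simp add: cv_def ev_def)
    apply (rule neq_at[of _ 5], simp add: cv_def ev_def)
    done
  have "cvs.independent {?a, ?b, ev 5, ?c}"
  proof (rule indep_test)
    fix f assume h: "\<And>k. (\<Sum>x\<in>{?a, ?b, ev 5, ?c}. f x * x k) = 0"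
    have "\<And>k. f ?a * ?a k + (f ?b * ?b k + (f (ev 5) * ev 5 k + f ?c * ?c k)) = 0" using h[of] d by simp
    from this[of 1] this[of 2] this[of 3] this[of 5] show "\<forall>x\<in>{?a, ?b, ev 5, ?c}. f x = 0" by (simp add: cv_def ev_def)
  qed simp
  then show ?thesis using PN4 d cvs.dim_span_eq_card_independent by simp
qed

lemma a_in: "elt_a S \<in> elems S" by (cases S) (auto simp: elems_def)

lemma ambdim_pos: "ambdim S \<ge> 2" by (cases S) auto

theorem proposition2:
  fixes S :: crit and lam :: complex and \<chi>a :: "nat \<Rightarrow> real" and \<epsilon> :: real
  assumes pos: "\<forall>i\<in>elems_a S. 0 < \<chi>a i"
    and stab: "chi_stable (Vamb S) (elems_a S) (Vfix S) \<chi>a"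
    and eps: "0 < \<epsilon>" "\<epsilon> < Rmin S \<chi>a"
  shows "let R = Rmin S \<chi>a;
             T = 1 + (R - \<epsilon>) * real (cdim (Vlam S lam)) / real (cdim (Vamb S));
             \<chi>S = (\<lambda>i. if i = elt_a S then (R - \<epsilon>) / T else \<chi>a i / T)
         in chi_stable (Vamb S) (elems S) (Vrep S lam) \<chi>S"
proof -
  define R where "R = Rmin S \<chi>a"
  define V where "V = Vamb S"
  define N where "N = cdim V"
  define d where "d = cdim (Vlam S lam)"
  define c where "c = R - \<epsilon>"
  define T where "T = 1 + c * real d / real N"
  define I where "I = elems_a S"
  define a where "a = elt_a S"
  define W where "W = {ev j | j. 1 \<le> j \<and> j \<le> ambdim S}"
  have finW: "finite W" unfolding W_def by simp
  have VW: "V = cspan W" unfolding V_def Vamb_def Cn_def W_def ..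
  have N: "N = ambdim S" unfolding N_def V_def Vamb_def by (rule dim_Cn)
  have N2: "N \<ge> 2" using N ambdim_pos by simp
  have dN: "real d \<ge> real N - 1" using dimlam[of S lam] N N2 unfolding d_def by linarith
  have c0: "c > 0" using eps unfolding c_def R_def by simp
  have T0: "T > 0" unfolding T_def using c0 N2 by (simp add: add_pos_nonneg)
  have finI: "finite I" unfolding I_def elems_a_def elems_def by simp
  have elems: "elems S = insert a I" "a \<notin> I" using a_in[of S] unfolding I_def a_def elems_a_def by auto
  have stab1: "(\<Sum>i\<in>I. \<chi>a i * real (cdim (Vfix S i))) = real N"
    and stab2: "\<And>M. csubspace M \<Longrightarrow> M \<subseteq> V \<Longrightarrow> M \<noteq> {0} \<Longrightarrow> M \<noteq> V \<Longrightarrow>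
        (\<Sum>i\<in>I. \<chi>a i * real (cdim (Vfix S i \<inter> M))) < real (cdim M)"
    using stab unfolding chi_stable_def I_def N_def V_def by auto
  define Q where "Q = {real (cdim M) - (\<Sum>i\<in>I. \<chi>a i * real (cdim (Vfix S i \<inter> M))) | M.
      csubspace M \<and> M \<subseteq> V \<and> M \<noteq> {0} \<and> M \<noteq> V}"
  have RQ: "R = Min Q" unfolding R_def Rmin_def Q_def I_def V_def ..
  have VsW: "V \<subseteq> cspan W" using VW by simp
  have dimM: "cdim M \<le> N" if "M \<subseteq> V" for M
    using dim_mono_fin[OF that VsW finW] unfolding N_def .
  have dimMi: "cdim (X \<inter> M) \<le> cdim M" if "M \<subseteq> V" for M X
    using dim_mono_fin[of "X \<inter> M" M W] that VsW finW by auto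
  have finQ: "finite Q"
  proof (rule finite_subset)
    show "Q \<subseteq> (\<lambda>(m,g). real m - (\<Sum>i\<in>I. \<chi>a i * real (g i))) ` ({..N} \<times> PiE I (\<lambda>_. {..N}))"
    proof
      fix q assume "q \<in> Q"
      then obtain M where M: "csubspace M" "M \<subseteq> V" and q: "q = real (cdim M) - (\<Sum>i\<in>I. \<chi>a i * real (cdim (Vfix S i \<inter> M)))"
        unfolding Q_def by auto
      define g where "g = restrict (\<lambda>i. cdim (Vfix S i \<inter> M)) I"
      have "q = (\<lambda>(m,g). real m - (\<Sum>i\<in>I. \<chi>a i * real (g i))) (cdim M, g)"
        using q unfolding g_def by (auto intro: sum.cong)
      moreover have "(cdim M, g) \<in> {..N} \<times> PiE I (\<lambda>_. {..N})"
        using dimM[OF M(2)] dimMi[OF M(2)] unfolding g_def by (auto intro: order_trans)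
      ultimately show "q \<in> (\<lambda>(m,g). real m - (\<Sum>i\<in>I. \<chi>a i * real (g i))) ` ({..N} \<times> PiE I (\<lambda>_. {..N}))"
        by blast
    qed
  qed (auto intro: finite_PiE finI)
  have Rle: "R \<le> real (cdim M) - (\<Sum>i\<in>I. \<chi>a i * real (cdim (Vfix S i \<inter> M)))"
    if "csubspace M" "M \<subseteq> V" "M \<noteq> {0}" "M \<noteq> V" for M
    unfolding RQ by (rule Min_le[OF finQ]) (use that in \<open>auto simp: Q_def\<close>)
  define \<chi>S where "\<chi>S = (\<lambda>i. if i = a then c / T else \<chi>a i / T)"
  have sumS: "(\<Sum>i\<in>elems S. \<chi>S i * real (cdim (G (Vrep S lam i)))) =
      (c * real (cdim (G (Vlam S lam))) + (\<Sum>i\<in>I. \<chi>a i * real (cdim (G (Vfix S i))))) / T" for G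
  proof -
    have "(\<Sum>i\<in>elems S. \<chi>S i * real (cdim (G (Vrep S lam i)))) =
       c / T * real (cdim (G (Vlam S lam))) + (\<Sum>i\<in>I. \<chi>a i / T * real (cdim (G (Vfix S i))))"
      unfolding elems(1) using elems(2) finI
      by (simp add: \<chi>S_def Vrep_def a_def[symmetric]) (rule sum.cong, auto)
    also have "(\<Sum>i\<in>I. \<chi>a i / T * real (cdim (G (Vfix S i)))) = (\<Sum>i\<in>I. \<chi>a i * real (cdim (G (Vfix S i)))) / T"
      by (simp add: sum_divide_distrib)
    finally show ?thesis by (simp add: add_divide_distrib)
  qed
  have "chi_stable V (elems S) (Vrep S lam) \<chi>S"
    unfolding chi_stable_def
  proof (intro conjI allI impI)
    have "(\<Sum>i\<in>elems S. \<chi>S i * real (cdim (Vrep S lam i))) = (c * real d + real N) / T"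
      using sumS[of "\<lambda>X. X"] unfolding stab1 d_def by simp
    also have "\<dots> = real N"
    proof -
      have p: "real N + c * real d > 0" using N2 c0 by (simp add: add_pos_nonneg)
      then show ?thesis unfolding T_def using N2 by (simp add: field_simps)
    qed
    finally show "(\<Sum>i\<in>elems S. \<chi>S i * real (cdim (Vrep S lam i))) = real (cdim V)" unfolding N_def .
  next
    fix M assume M: "csubspace M \<and> M \<subseteq> V \<and> M \<noteq> {0} \<and> M \<noteq> V"
    define m where "m = real (cdim M)"
    define k where "k = real (cdim (Vlam S lam \<inter> M))"
    define \<Sigma> where "\<Sigma> = (\<Sum>i\<in>I. \<chi>a i * real (cdim (Vfix S i \<inter> M)))"
    have Sig: "\<Sigma> \<le> m - R" using Rle[of M] M unfolding \<Sigma>_def m_def by linarith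
    have km: "k \<le> m" using dimMi[of M] M unfolding k_def m_def by auto
    have mN: "m < real N" using dim_psub[of M V W] M VsW finW unfolding m_def N_def by auto
    have m0: "m \<ge> 0" unfolding m_def by simp
    have "c * m / real N < c" using mN c0 N2 by (simp add: field_simps)
    have "c * real d * m / real N \<ge> c * (real N - 1) * m / real N"
      using dN c0 m0 N2 by (intro divide_right_mono mult_right_mono mult_left_mono) auto
    also have "c * (real N - 1) * m / real N = c * m - c * m / real N" using N2 by (simp add: field_simps)
    finally have key: "c * real d * m / real N > c * k - R"
      using \<open>c * m / real N < c\<close> km c0 eps unfolding c_def
      by (smt (verit, best) mult_left_mono)
    have "c * k + \<Sigma> < m * T"
      unfolding T_def using key Sig by (simp add: algebra_simps)
    then have "(c * k + \<Sigma>) / T < m" using T0 by (simp add: divide_less_eq)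
    then show "(\<Sum>i\<in>elems S. \<chi>S i * real (cdim (Vrep S lam i \<inter> M))) < real (cdim M)"
      using sumS[of "\<lambda>X. X \<inter> M"] unfolding k_def \<Sigma>_def m_def by simp
  qed
  then show ?thesis unfolding Let_def \<chi>S_def T_def c_def R_def a_def d_def N_def V_def .
qed
end
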